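(* For every positive integer $n$, \[ \overline{M}(n)=\sum_{d\mid n}\varphi(d)\sum_{\substack{\delta\mid n\\ \gcd(\delta,d)=1}}\mu(\delta)\sum_{\substack{1\le j\le n/\delta\\ \delta j\equiv 1 \ (\mathrm{mod}\ d)}} f\!\left(\left\lfloor \frac{n}{j\delta}\right\rfloor\right), \] where $d$ and $\delta$ run over the positive divisors of $n$, and for $d=1$ the congruence condition is vacuous.
   Context: For a nonempty finite set $A$ of positive integers, $(A)$ denotes the greatest common divisor of the elements of $A$. $\varphi$ is Euler's totient function and $\mu$ is the Möbius function. For $m\in\mathbb{N}$, $f(m)$ is the number of nonempty subsets $A\subseteq\{1,2,\ldots,m\}$ with $(A)=1$ (equivalently $f(m)=\sum_{d=1}^m\mu(d)(2^{\lfloor m/d\rfloor}-1)$). Define \[ \overline{M}(n)=\sum_{\substack{\emptyset\ne A\subseteq\{1,\ldots,n\}\\ \gcd((A),n)=1}}\gcd((A)-1,n), \] the sum over all nonempty subsets $A$ of $\{1,\ldots,n\}$ with $\gcd((A),n)=1$, with the convention $\gcd(0,n)=n$. *)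

theory Defs
  imports "HOL-Number_Theory.Number_Theory" "HOL-Computational_Algebra.Squarefree"
begin

definition moebius_mu :: "nat \<Rightarrow> int" where
  "moebius_mu n = (if n = 0 then 0 else if squarefree n then (-1) ^ card (prime_factors n) else 0)"

definition f_cop :: "nat \<Rightarrow> nat" where
  "f_cop m = card {A. A \<subseteq> {1..m} \<and> A \<noteq> {} \<and> Gcd A = 1}"

text \<open>Mbar n = sum over nonempty A \<subseteq> {1..n} with gcd((A),n)=1 of gcd((A)-1, n).
  Since (A) \<ge> 1, natural subtraction is exact; gcd 0 n = n holds by definition.\<close>
definition Mbar :: "nat \<Rightarrow> nat" where
  "Mbar n = (\<Sum>A \<in> {A. A \<subseteq> {1..n} \<and> A \<noteq> {} \<and> coprime (Gcd A) n}. gcd (Gcd A - 1) n)"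

end

theory Submission
  imports Defs
begin


lemma mu_prime_mult:
  assumes p: "prime (p::nat)" and nd: "\<not> p dvd d" and d: "d > 0"
  shows "moebius_mu (p * d) = - moebius_mu d"
proof -
  have cop: "coprime p d" using p nd by (simp add: prime_imp_coprime)
  have sq: "squarefree (p*d) \<longleftrightarrow> squarefree d"
    using squarefree_mult_coprime[OF cop squarefree_prime[OF p]] squarefree_mono[of d "p*d"] by auto
  have pf: "prime_factors (p*d) = insert p (prime_factors d)"
    using prime_factors_product[of p d] p d prime_prime_factors[OF p] by auto
  have "p \<notin> prime_factors d" using nd by auto
  hence "card (prime_factors (p*d)) = Suc (card (prime_factors d))" using pf by simp
  thus ?thesis using sq p d unfolding moebius_mu_def by (auto simp: prime_gt_0_nat)
qed

lemma mu_sq: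
  assumes "(p::nat) > 1" "p*p dvd d"
  shows "moebius_mu d = 0"
proof -
  have "\<not> squarefree d" using assms by (intro not_squarefreeI[of p]) (auto simp: power2_eq_square)
  thus ?thesis by (simp add: moebius_mu_def)
qed

lemma mu_sum:
  assumes "(m::nat) > 0"
  shows "(\<Sum>d | d dvd m. moebius_mu d) = (if m = 1 then 1 else 0)"
proof (cases "m = 1")
  case True
  then show ?thesis by (simp add: moebius_mu_def)
next
  case False
  then obtain p where p: "prime p" "p dvd m" using assms prime_factor_nat by blast
  then obtain r where r: "m = p * r" by blast
  have r0: "r > 0" using r assms by (cases r) auto
  have p1: "p > 1" using p prime_gt_1_nat by blast
  have fin: "finite {d. d dvd m}" using assms by simp
  let ?A = "{d. d dvd r \<and> \<not> p dvd d}"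
  have finA: "finite ?A" using r0 by auto
  have split: "{d. d dvd m} = {d. d dvd m \<and> \<not> p dvd d} \<union> {d. d dvd m \<and> p dvd d}" by auto
  have e1: "{d. d dvd m \<and> \<not> p dvd d} = ?A"
  proof safe
    fix d assume "d dvd m" "\<not> p dvd d"
    hence "coprime d p" using p by (metis prime_imp_coprime coprime_commute)
    thus "d dvd r" using \<open>d dvd m\<close> r by (metis coprime_dvd_mult_right_iff)
  next
    fix d assume "d dvd r" thus "d dvd m" using r by simp
  qed
  have e2: "(\<Sum>d | d dvd m \<and> p dvd d. moebius_mu d) = (\<Sum>d\<in>?A. moebius_mu (p*d))"
  proof -
    have "(\<Sum>d | d dvd m \<and> p dvd d. moebius_mu d) = (\<Sum>d\<in>(\<lambda>d. p*d) ` {d. d dvd r}. moebius_mu d)"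
    proof (rule sum.cong)
      show "{d. d dvd m \<and> p dvd d} = (\<lambda>d. p*d) ` {d. d dvd r}"
      proof safe
        fix d assume "d dvd m" "p dvd d"
        then obtain e where e: "d = p*e" by blast
        have "e dvd r" using \<open>d dvd m\<close> p1 by (simp add: r e)
        thus "d \<in> (\<lambda>d. p*d) ` {d. d dvd r}" using e by blast
      qed (auto simp: r)
    qed simp
    also have "\<dots> = (\<Sum>d | d dvd r. moebius_mu (p*d))"
      using p1 by (subst sum.reindex) (auto simp: inj_on_def)
    also have "\<dots> = (\<Sum>d\<in>?A. moebius_mu (p*d))"
    proof (rule sum.mono_neutral_right)
      show "finite {d. d dvd r}" using r0 by simp
      show "\<forall>i\<in>{d. d dvd r} - ?A. moebius_mu (p * i) = 0"
        using p1 by (auto intro!: mu_sq[of p])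
    qed auto
    finally show ?thesis .
  qed
  have "(\<Sum>d | d dvd m. moebius_mu d) = (\<Sum>d | d dvd m \<and> \<not> p dvd d. moebius_mu d) + (\<Sum>d | d dvd m \<and> p dvd d. moebius_mu d)"
    by (subst split, rule sum.union_disjoint) (use fin in auto)
  also have "\<dots> = (\<Sum>d\<in>?A. moebius_mu d) + (\<Sum>d\<in>?A. moebius_mu (p*d))" using e1 e2 by simp
  also have "\<dots> = 0" 
    by (simp add: sum.distrib[symmetric] mu_prime_mult p) (rule sum.neutral, use r0 in \<open>auto simp: mu_prime_mult p intro: Nat.gr0I\<close>)
  finally show ?thesis using False by simp
qed


lemma gcd_totient:
  assumes "(n::nat) > 0"
  shows "int (gcd m n) = (\<Sum>d | d dvd n. if d dvd m then int (totient d) else 0)"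
proof -
  have "(\<Sum>d | d dvd gcd m n. int (totient d)) = int (\<Sum>d | d dvd gcd m n. totient d)"
    by (rule of_nat_sum[symmetric])
  also have "\<dots> = int (gcd m n)" by (simp only: totient_divisor_sum)
  finally have "int (gcd m n) = (\<Sum>d | d dvd gcd m n. int (totient d))" by simp
  also have "{d. d dvd gcd m n} = {d \<in> {d. d dvd n}. d dvd m}" by auto
  also have "(\<Sum>d\<in>{d \<in> {d. d dvd n}. d dvd m}. int (totient d)) = (\<Sum>d | d dvd n. if d dvd m then int (totient d) else 0)"
    by (rule sum.inter_filter) (use assms in simp)
  finally show ?thesis .
qed

lemma coprime_mu:
  assumes "(n::nat) > 0" "k > 0"
  shows "(if coprime k n then 1 else 0) = (\<Sum>d | d dvd n. if d dvd k then moebius_mu d else 0)"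
proof -
  have g: "gcd k n > 0" using assms by simp
  have "(\<Sum>d | d dvd n. if d dvd k then moebius_mu d else 0) = (\<Sum>d\<in>{d \<in> {d. d dvd n}. d dvd k}. moebius_mu d)"
    by (rule sum.inter_filter[symmetric]) (use assms in simp)
  also have "{d \<in> {d. d dvd n}. d dvd k} = {d. d dvd gcd k n}" by auto
  also have "(\<Sum>d\<in>{d. d dvd gcd k n}. moebius_mu d) = (if gcd k n = 1 then 1 else 0)" by (rule mu_sum[OF g])
  finally show ?thesis by (simp only: coprime_iff_gcd_eq_1)
qed

lemma count_gcd:
  assumes "(k::nat) > 0"
  shows "card {A. A \<subseteq> {1..n} \<and> A \<noteq> {} \<and> Gcd A = k} = f_cop (n div k)"
proof -
  let ?B = "{B. B \<subseteq> {1..n div k} \<and> B \<noteq> {} \<and> Gcd B = 1}"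
  have injk: "inj ((*) k)" using assms by (auto simp: inj_on_def)
  have eq: "{A. A \<subseteq> {1..n} \<and> A \<noteq> {} \<and> Gcd A = k} = (\<lambda>B. (*) k ` B) ` ?B"
  proof (rule equalityI; rule subsetI)
    fix A assume "A \<in> {A. A \<subseteq> {1..n} \<and> A \<noteq> {} \<and> Gcd A = k}"
    hence A: "A \<subseteq> {1..n}" "A \<noteq> {}" "Gcd A = k" by auto
    let ?C = "(\<lambda>a. a div k) ` A"
    have dv: "\<And>a. a \<in> A \<Longrightarrow> k dvd a" using A(3) Gcd_dvd[of _ A] by auto
    have AC: "A = (*) k ` ?C"
    proof -
      have "(*) k ` ?C = (\<lambda>a. k * (a div k)) ` A" by (simp add: image_image)
      also have "\<dots> = A" proof -
        have "(\<lambda>a. k * (a div k)) ` A = (\<lambda>a. a) ` A" by (rule image_cong) (auto dest: dv)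
        thus ?thesis by simp
      qed
      finally show ?thesis by simp
    qed
    have "Gcd A = k * Gcd ?C" using Gcd_mult[of k ?C] AC by simp
    hence g1: "Gcd ?C = 1" using A(3) assms by simp
    have "?C \<subseteq> {1..n div k}"
    proof
      fix c assume "c \<in> ?C"
      then obtain a where a: "a \<in> A" "c = a div k" by blast
      have "a \<ge> 1" "a \<le> n" using a A(1) by auto
      have "k dvd a" using dv a by simp
      hence "k \<le> a" using \<open>a \<ge> 1\<close> by (simp add: dvd_imp_le)
      hence "c > 0" using a assms by (simp add: div_greater_zero_iff)
      hence "c \<ge> 1" by simp
      moreover have "c \<le> n div k" using a \<open>a \<le> n\<close> by (simp add: div_le_mono)
      ultimately show "c \<in> {1..n div k}" by simp
    qed
    moreover have "?C \<noteq> {}" using A(2) by simp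
    ultimately show "A \<in> (\<lambda>B. (*) k ` B) ` ?B" using AC g1 by blast
  next
    fix A assume "A \<in> (\<lambda>B. (*) k ` B) ` ?B"
    then obtain B where B0: "A = (*) k ` B" "B \<subseteq> {1..n div k}" "B \<noteq> {}" "Gcd B = 1" by auto
    have "A \<subseteq> {1..n}"
    proof
    fix y assume "y \<in> A"
    then obtain x where B: "x \<in> B" "y = k * x" using B0 by auto
    hence "1 \<le> x" "x \<le> n div k" using B0 by auto
    hence "k * x \<le> n" using mult_le_mono2[of x "n div k" k] times_div_less_eq_dividend[of k n] by linarith
    thus "y \<in> {1..n}" using \<open>1 \<le> x\<close> assms B by simp
    qed
    moreover have "Gcd A = k" using B0 by (simp add: Gcd_mult)
    ultimately show "A \<in> {A. A \<subseteq> {1..n} \<and> A \<noteq> {} \<and> Gcd A = k}" using B0 by auto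
  qed
  have "inj_on (\<lambda>B. (*) k ` B) ?B" using inj_image_eq_iff[OF injk] unfolding inj_on_def by blast
  thus ?thesis unfolding eq f_cop_def by (simp add: card_image)
qed

lemma Gcd_range:
  assumes "A \<subseteq> {1..(n::nat)}" "A \<noteq> {}"
  shows "Gcd A \<in> {1..n}"
proof -
  obtain a where a: "a \<in> A" using assms by blast
  have "a \<ge> 1" "a \<le> n" using a assms by auto
  have "Gcd A dvd a" using a by (rule Gcd_dvd)
  hence "Gcd A \<le> a" using \<open>a \<ge> 1\<close> by (simp add: dvd_imp_le)
  moreover have "\<not> A \<subseteq> {0}" using a \<open>a \<ge> 1\<close> by auto
  hence "Gcd A \<noteq> 0" by (simp add: Gcd_0_iff)
  hence "1 \<le> Gcd A" by linarith
  ultimately show ?thesis using \<open>a \<le> n\<close> by simp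
qed

lemma sumS:
  fixes F :: "nat \<Rightarrow> int"
  shows "(\<Sum>A \<in> {A. A \<subseteq> {1..n} \<and> A \<noteq> {} \<and> coprime (Gcd A) n}. F (Gcd A))
       = (\<Sum>k\<in>{1..n}. if coprime k n then F k * int (f_cop (n div k)) else 0)"
proof -
  let ?S = "{A. A \<subseteq> {1..n} \<and> A \<noteq> {} \<and> coprime (Gcd A) n}"
  have finS: "finite ?S" by (rule finite_subset[of _ "Pow {1..n}"]) auto
  have img: "Gcd ` ?S \<subseteq> {1..n}" using Gcd_range by blast
  have "(\<Sum>A \<in> ?S. F (Gcd A)) = (\<Sum>k\<in>{1..n}. \<Sum>A\<in>{A\<in>?S. Gcd A = k}. F (Gcd A))"
    by (rule sum.group[symmetric, OF finS finite_atLeastAtMost img])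
  also have "\<dots> = (\<Sum>k\<in>{1..n}. if coprime k n then F k * int (f_cop (n div k)) else 0)"
  proof (rule sum.cong[OF refl])
    fix k assume k: "k \<in> {1..n}"
    have e: "{A\<in>?S. Gcd A = k} = (if coprime k n then {A. A \<subseteq> {1..n} \<and> A \<noteq> {} \<and> Gcd A = k} else {})"
      by auto
    have "(\<Sum>A\<in>{A\<in>?S. Gcd A = k}. F (Gcd A)) = (\<Sum>A\<in>{A\<in>?S. Gcd A = k}. F k)" by simp
    also have "\<dots> = F k * int (card {A\<in>?S. Gcd A = k})" by simp
    finally show "(\<Sum>A\<in>{A\<in>?S. Gcd A = k}. F (Gcd A)) = (if coprime k n then F k * int (f_cop (n div k)) else 0)"
      using e k count_gcd[of k n] by (cases "coprime k n") auto
  qed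
  finally show ?thesis .
qed

lemma reindex:
  fixes F :: "nat \<Rightarrow> int"
  assumes "\<delta> > 0"
  shows "(\<Sum>k\<in>{1..n}. if \<delta> dvd k \<and> d dvd k - 1 then F k else 0)
     = (\<Sum>j | 1 \<le> j \<and> j \<le> n div \<delta> \<and> [\<delta> * j = 1] (mod d). F (j * \<delta>))"
proof -
  let ?J = "{j. 1 \<le> j \<and> j \<le> n div \<delta> \<and> [\<delta> * j = 1] (mod d)}"
  have "(\<Sum>k\<in>{1..n}. if \<delta> dvd k \<and> d dvd k - 1 then F k else 0)
      = (\<Sum>k\<in>{k\<in>{1..n}. \<delta> dvd k \<and> d dvd k - 1}. F k)"
    by (rule sum.inter_filter[symmetric]) simp
  also have "{k\<in>{1..n}. \<delta> dvd k \<and> d dvd k - 1} = (\<lambda>j. j * \<delta>) ` ?J"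
  proof (rule equalityI; rule subsetI)
    fix k assume "k \<in> {k\<in>{1..n}. \<delta> dvd k \<and> d dvd k - 1}"
    hence k: "1 \<le> k" "k \<le> n" "\<delta> dvd k" "d dvd k - 1" by auto
    then obtain j where j: "k = \<delta> * j" by blast
    have "j \<ge> 1" using k j by (cases j) auto
    moreover have "j \<le> n div \<delta>" using k j assms by (metis div_le_mono nonzero_mult_div_cancel_left not_gr0)
    moreover have "[\<delta> * j = 1] (mod d)" using k j by (simp add: cong_altdef_nat)
    ultimately show "k \<in> (\<lambda>j. j * \<delta>) ` ?J" using j by (auto simp: mult.commute)
  next
    fix k assume "k \<in> (\<lambda>j. j * \<delta>) ` ?J"
    then obtain j where j: "k = j * \<delta>" "1 \<le> j" "j \<le> n div \<delta>" "[\<delta> * j = 1] (mod d)" by auto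
    have "1 \<le> k" using j assms by simp
    moreover have "k \<le> n" using j mult_le_mono1[of j "n div \<delta>" \<delta>] div_times_less_eq_dividend[of n \<delta>] by linarith
    moreover have "d dvd k - 1" using j \<open>1 \<le> k\<close> by (simp add: cong_altdef_nat mult.commute)
    ultimately show "k \<in> {k\<in>{1..n}. \<delta> dvd k \<and> d dvd k - 1}" using j by auto
  qed
  also have "(\<Sum>k\<in>(\<lambda>j. j * \<delta>) ` ?J. F k) = (\<Sum>j\<in>?J. F (j * \<delta>))"
    using assms by (subst sum.reindex) (auto simp: inj_on_def)
  finally show ?thesis .
qed

lemma pointwise:
  fixes c :: int
  assumes "n > 0" "k > 0"
  shows "(if coprime k n then int (gcd (k - 1) n) * c else 0)
    = (\<Sum>d | d dvd n. \<Sum>\<delta> | \<delta> dvd n. if \<delta> dvd k \<and> d dvd k - 1 then int (totient d) * (moebius_mu \<delta> * c) else 0)"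
proof -
  have "(if coprime k n then int (gcd (k - 1) n) * c else 0)
      = (\<Sum>d | d dvd n. if d dvd k - 1 then int (totient d) else 0) * ((if coprime k n then 1 else 0) * c)"
    using gcd_totient[OF assms(1), of "k - 1"] by simp
  also have "\<dots> = (\<Sum>d | d dvd n. if d dvd k - 1 then int (totient d) else 0) * ((\<Sum>\<delta> | \<delta> dvd n. if \<delta> dvd k then moebius_mu \<delta> else 0) * c)"
    using coprime_mu[OF assms] by simp
  also have "\<dots> = (\<Sum>d | d dvd n. if d dvd k - 1 then int (totient d) else 0) * (\<Sum>\<delta> | \<delta> dvd n. (if \<delta> dvd k then moebius_mu \<delta> else 0) * c)"
    by (simp add: sum_distrib_right)
  also have "\<dots> = (\<Sum>d | d dvd n. \<Sum>\<delta> | \<delta> dvd n. (if d dvd k - 1 then int (totient d) else 0) * ((if \<delta> dvd k then moebius_mu \<delta> else 0) * c))"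
    by (rule sum_product)
  also have "\<dots> = (\<Sum>d | d dvd n. \<Sum>\<delta> | \<delta> dvd n. if \<delta> dvd k \<and> d dvd k - 1 then int (totient d) * (moebius_mu \<delta> * c) else 0)"
    by (intro sum.cong refl) simp
  finally show ?thesis .
qed

theorem mainTheorem1:
  fixes n :: nat
  assumes "n > 0"
  shows "int (Mbar n) =
    (\<Sum>d | d dvd n. int (totient d) *
       (\<Sum>\<delta> | \<delta> dvd n \<and> coprime \<delta> d. moebius_mu \<delta> *
          (\<Sum>j | 1 \<le> j \<and> j \<le> n div \<delta> \<and> [\<delta> * j = 1] (mod d).
              int (f_cop (n div (j * \<delta>))))))"
proof -
  let ?S = "{A. A \<subseteq> {1..n} \<and> A \<noteq> {} \<and> coprime (Gcd A) n}"
  let ?J = "\<lambda>\<delta> d. {j. 1 \<le> j \<and> j \<le> n div \<delta> \<and> [\<delta> * j = 1] (mod d)}"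
  have fD: "finite {d. d dvd n}" using assms by simp
  have "int (Mbar n) = (\<Sum>A\<in>?S. int (gcd (Gcd A - 1) n))"
    unfolding Mbar_def by simp
  also have "\<dots> = (\<Sum>k\<in>{1..n}. if coprime k n then int (gcd (k - 1) n) * int (f_cop (n div k)) else 0)"
    by (rule sumS)
  also have "\<dots> = (\<Sum>k\<in>{1..n}. \<Sum>d | d dvd n. \<Sum>\<delta> | \<delta> dvd n. if \<delta> dvd k \<and> d dvd k - 1 then int (totient d) * (moebius_mu \<delta> * int (f_cop (n div k))) else 0)"
    by (intro sum.cong refl pointwise assms) auto
  also have "\<dots> = (\<Sum>d | d dvd n. \<Sum>k\<in>{1..n}. \<Sum>\<delta> | \<delta> dvd n. if \<delta> dvd k \<and> d dvd k - 1 then int (totient d) * (moebius_mu \<delta> * int (f_cop (n div k))) else 0)"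
    by (rule sum.swap)
  also have "\<dots> = (\<Sum>d | d dvd n. \<Sum>\<delta> | \<delta> dvd n. \<Sum>k\<in>{1..n}. if \<delta> dvd k \<and> d dvd k - 1 then int (totient d) * (moebius_mu \<delta> * int (f_cop (n div k))) else 0)"
    by (intro sum.cong refl sum.swap)
  also have "\<dots> = (\<Sum>d | d dvd n. int (totient d) * (\<Sum>\<delta> | \<delta> dvd n. moebius_mu \<delta> * (\<Sum>k\<in>{1..n}. if \<delta> dvd k \<and> d dvd k - 1 then int (f_cop (n div k)) else 0)))"
    by (simp add: sum_distrib_left if_distrib cong: if_cong)
  also have "\<dots> = (\<Sum>d | d dvd n. int (totient d) * (\<Sum>\<delta> | \<delta> dvd n. moebius_mu \<delta> * (\<Sum>j\<in>?J \<delta> d. int (f_cop (n div (j * \<delta>))))))"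
  proof -
    have R: "\<And>d \<delta>. \<delta> dvd n \<Longrightarrow> (\<Sum>k\<in>{1..n}. if \<delta> dvd k \<and> d dvd k - 1 then int (f_cop (n div k)) else 0) = (\<Sum>j\<in>?J \<delta> d. int (f_cop (n div (j * \<delta>))))"
    proof -
      fix d \<delta> assume "\<delta> dvd n"
      hence "\<delta> > 0" using assms by (auto intro: Nat.gr0I)
      thus "(\<Sum>k\<in>{1..n}. if \<delta> dvd k \<and> d dvd k - 1 then int (f_cop (n div k)) else 0) = (\<Sum>j\<in>?J \<delta> d. int (f_cop (n div (j * \<delta>))))"
        by (rule reindex)
    qed
    show ?thesis by (rule sum.cong[OF refl], rule arg_cong2[where f="(*)"], rule refl, rule sum.cong[OF refl], rule arg_cong2[where f="(*)"], rule refl, rule R, simp)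
  qed
  also have "\<dots> = (\<Sum>d | d dvd n. int (totient d) * (\<Sum>\<delta> | \<delta> dvd n \<and> coprime \<delta> d. moebius_mu \<delta> * (\<Sum>j\<in>?J \<delta> d. int (f_cop (n div (j * \<delta>))))))"
  proof (rule sum.cong[OF refl], rule arg_cong2[where f = "(*)"], rule refl)
    fix d
    show "(\<Sum>\<delta> | \<delta> dvd n. moebius_mu \<delta> * (\<Sum>j\<in>?J \<delta> d. int (f_cop (n div (j * \<delta>)))))
        = (\<Sum>\<delta> | \<delta> dvd n \<and> coprime \<delta> d. moebius_mu \<delta> * (\<Sum>j\<in>?J \<delta> d. int (f_cop (n div (j * \<delta>)))))"
    proof (rule sum.mono_neutral_right)
      show "finite {\<delta>. \<delta> dvd n}" by (rule fD)
      show "{\<delta>. \<delta> dvd n \<and> coprime \<delta> d} \<subseteq> {\<delta>. \<delta> dvd n}" by auto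
      show "\<forall>\<delta>\<in>{\<delta>. \<delta> dvd n} - {\<delta>. \<delta> dvd n \<and> coprime \<delta> d}. moebius_mu \<delta> * (\<Sum>j\<in>?J \<delta> d. int (f_cop (n div (j * \<delta>)))) = 0"
      proof
        fix \<delta> assume "\<delta> \<in> {\<delta>. \<delta> dvd n} - {\<delta>. \<delta> dvd n \<and> coprime \<delta> d}"
        hence nc: "\<not> coprime \<delta> d" by auto
        have Je: "?J \<delta> d = {}"
        proof (rule ccontr)
          assume "?J \<delta> d \<noteq> {}"
          then obtain j where "[\<delta> * j = 1] (mod d)" by auto
          hence "coprime (\<delta> * j) d" using cong_imp_coprime[of 1 "\<delta> * j" d] by (simp add: cong_sym)
          hence "coprime \<delta> d" by simp
          thus False using nc by simp
        qed
        thus "moebius_mu \<delta> * (\<Sum>j\<in>?J \<delta> d. int (f_cop (n div (j * \<delta>)))) = 0" by (simp only: Je sum.empty mult_zero_right)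
      qed
    qed
  qed
  finally show ?thesis .
qed
end
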